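(* For every object $(G,\hat q,f)$ of $\mathsf{PSM}$, the kernel of the group homomorphism $F:\mathrm{Aut}_{\mathsf{PSM}}(G,\hat q,f)\to\mathrm{Aut}_{\mathsf{ASCS}}(F(G,\hat q,f))$ is isomorphic to $\mathbb{Z}_2$.
   Context: A quadratic form on a finite abelian group $G$ is a map $q:G\to\mathbb{Q}/\mathbb{Z}$ such that $b(x,y):=q(x+y)-q(x)-q(y)+q(0)$ is bilinear; non-degenerate if $b$ is; homogeneous if $q(nx)=n^2q(x)$ for $n\in\mathbb{Z}$. $q\sim q'$ if there is $\Delta\in G$ with $q(g)=q'(g-\Delta)$ for all $g$; $[q]$ is the class. Gauss sum: $\tau^+(G,q)=|G|^{-1/2}\sum_{g\in G}e^{2\pi i q(g)}$. $\mathsf{ASCS}$: objects $(\mathscr{D},[q],\sigma)$ with $\mathscr{D}$ finite abelian, $[q]$ a class of non-degenerate quadratic forms on $\mathscr{D}$ with no representative satisfying $q(0)=0$, $\sigma\in\mathbb{Z}_8$, and $\tau^+(\mathscr{D},q)=e^{2\pi i\sigma/8}$; morphisms are group isomorphisms $\phi$ with $[q_2\circ\phi]=[q_1]$. $\mathsf{PSM}$: objects $(G,\hat q,f)$ with $G$ finite abelian, $\hat q$ a non-degenerate homogeneous quadratic form, $f\in G$ with $2f=0$, $\hat q(f)=\tfrac12$; morphisms are group isomorphisms $\phi$ with $\hat q_2\circ\phi=\hat q_1$, $\phi(f_1)=f_2$. Functor $F$: for $(G,\hat q,f)$ with bilinear form $\hat b$, $G_0=\{g:\hat b(g,f)=0\}$,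 $\mathscr{D}=G_0/\langle f\rangle$, $a\in G\setminus G_0$, $q_a([x])=\hat q(x-a)$ for $x\in G_0$, $\sigma\in\mathbb{Z}_8$ with $\tau^+(G,\hat q)=e^{2\pi i\sigma/8}$; $F(G,\hat q,f)=(\mathscr{D},[q_a],\sigma)$ and $F(\phi)$ is the isomorphism induced on $G_0/\langle f\rangle$. *)

theory Defs
  imports Complex_Main "HOL-Algebra.Elementary_Groups"
begin

text \<open>Values in Q/Z are represented by rationals, compared modulo the integers.\<close>

definition qz_eq :: "rat \<Rightarrow> rat \<Rightarrow> bool" where
  "qz_eq a b \<longleftrightarrow> a - b \<in> \<int>"

definition zmult :: "int \<Rightarrow> 'a::ab_group_add \<Rightarrow> 'a" where
  "zmult n x = (if 0 \<le> n then (((+) x) ^^ nat n) 0 else - ((((+) x) ^^ nat (- n)) 0))"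

definition assoc_bil :: "('a::ab_group_add \<Rightarrow> rat) \<Rightarrow> 'a \<Rightarrow> 'a \<Rightarrow> rat" where
  "assoc_bil q x y = q (x + y) - q x - q y + q 0"

definition is_quadratic_form :: "('a::ab_group_add \<Rightarrow> rat) \<Rightarrow> bool" where
  "is_quadratic_form q \<longleftrightarrow>
     (\<forall>x x' y. qz_eq (assoc_bil q (x + x') y) (assoc_bil q x y + assoc_bil q x' y)) \<and>
     (\<forall>x y y'. qz_eq (assoc_bil q x (y + y')) (assoc_bil q x y + assoc_bil q x y'))"

definition nondegenerate :: "('a::ab_group_add \<Rightarrow> rat) \<Rightarrow> bool" where
  "nondegenerate q \<longleftrightarrow> (\<forall>x. (\<forall>y. qz_eq (assoc_bil q x y) 0) \<longrightarrow> x = 0)"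

definition homogeneous :: "('a::ab_group_add \<Rightarrow> rat) \<Rightarrow> bool" where
  "homogeneous q \<longleftrightarrow> (\<forall>(n::int) x. qz_eq (q (zmult n x)) (of_int (n^2) * q x))"

definition PSM_obj :: "('a::{ab_group_add,finite} \<Rightarrow> rat) \<Rightarrow> 'a \<Rightarrow> bool" where
  "PSM_obj q f \<longleftrightarrow> is_quadratic_form q \<and> nondegenerate q \<and> homogeneous q \<and>
     f + f = 0 \<and> qz_eq (q f) (1/2)"

definition PSM_aut :: "('a::ab_group_add \<Rightarrow> rat) \<Rightarrow> 'a \<Rightarrow> ('a \<Rightarrow> 'a) set" where
  "PSM_aut q f = {\<phi>. bij \<phi> \<and> (\<forall>x y. \<phi> (x + y) = \<phi> x + \<phi> y) \<and>
                       (\<forall>x. qz_eq (q (\<phi> x)) (q x)) \<and> \<phi> f = f}"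

text \<open>G_0 and D = G_0 / <f>, elements of D being cosets of <f> = {0, f}.\<close>
definition G0 :: "('a::ab_group_add \<Rightarrow> rat) \<Rightarrow> 'a \<Rightarrow> 'a set" where
  "G0 q f = {g. qz_eq (assoc_bil q g f) 0}"

definition Dgrp :: "('a::ab_group_add \<Rightarrow> rat) \<Rightarrow> 'a \<Rightarrow> 'a set set" where
  "Dgrp q f = {(\<lambda>y. x + y) ` {0, f} | x. x \<in> G0 q f}"

text \<open>F on morphisms: the isomorphism induced on G_0/<f>.\<close>
definition F_mor :: "('a \<Rightarrow> 'a) \<Rightarrow> 'a set \<Rightarrow> 'a set" where
  "F_mor \<phi> C = \<phi> ` C"

definition F_kernel :: "('a::ab_group_add \<Rightarrow> rat) \<Rightarrow> 'a \<Rightarrow> ('a \<Rightarrow> 'a) set" where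
  "F_kernel q f = {\<phi> \<in> PSM_aut q f. \<forall>C \<in> Dgrp q f. F_mor \<phi> C = C}"

definition F_kernel_group :: "('a::ab_group_add \<Rightarrow> rat) \<Rightarrow> 'a \<Rightarrow> ('a \<Rightarrow> 'a) monoid" where
  "F_kernel_group q f = \<lparr>carrier = F_kernel q f, mult = (\<circ>), one = id\<rparr>"

end

theory Submission
  imports Defs
begin


lemma qz_refl: "qz_eq a a" by (simp add: qz_eq_def)
lemma qz_sym: "qz_eq a b \<Longrightarrow> qz_eq b a"
  unfolding qz_eq_def by (metis Ints_minus minus_diff_eq)
lemma qz_trans: "qz_eq a b \<Longrightarrow> qz_eq b c \<Longrightarrow> qz_eq a c"
  unfolding qz_eq_def
proof -
  assume "a - b \<in> \<int>" "b - c \<in> \<int>"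
  then have "(a - b) + (b - c) \<in> \<int>" by (rule Ints_add)
  then show "a - c \<in> \<int>" by simp
qed
lemma qz_add: "qz_eq a b \<Longrightarrow> qz_eq c d \<Longrightarrow> qz_eq (a + c) (b + d)"
  unfolding qz_eq_def
proof -
  assume "a - b \<in> \<int>" "c - d \<in> \<int>"
  then have "(a - b) + (c - d) \<in> \<int>" by (rule Ints_add)
  moreover have "(a - b) + (c - d) = (a + c) - (b + d)" by simp
  ultimately show "a + c - (b + d) \<in> \<int>" by simp
qed
lemma qz_diff: "qz_eq a b \<Longrightarrow> qz_eq c d \<Longrightarrow> qz_eq (a - c) (b - d)"
  unfolding qz_eq_def
proof -
  assume "a - b \<in> \<int>" "c - d \<in> \<int>"
  then have "(a - b) - (c - d) \<in> \<int>" by (rule Ints_diff)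
  moreover have "(a - b) - (c - d) = (a - c) - (b - d)" by simp
  ultimately show "a - c - (b - d) \<in> \<int>" by simp
qed
lemma half_not_int: "\<not> qz_eq (1/2::rat) 0"
proof
  assume "qz_eq (1/2::rat) 0"
  then obtain k :: int where "(1/2::rat) = of_int k" unfolding qz_eq_def by (auto elim: Ints_cases)
  then have "(1::rat) = of_int (2*k)" by simp
  then have "(1::int) = 2 * k" by linarith
  then show False by presburger
qed
lemma qz_half_cases: assumes "qz_eq (t + t) 0" shows "qz_eq t 0 \<or> qz_eq (t::rat) (1/2)"
proof -
  obtain k :: int where k: "t + t = of_int k" using assms unfolding qz_eq_def by (auto elim: Ints_cases)
  show ?thesis
  proof (cases "even k")
    case True
    then obtain m where "k = 2 * m" by blast
    with k have "t = of_int m" by simp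
    then show ?thesis unfolding qz_eq_def by simp
  next
    case False
    then obtain m where "k = 2 * m + 1" using oddE by blast
    with k have "t - 1/2 = of_int m" by simp
    then show ?thesis unfolding qz_eq_def by (metis Ints_of_int)
  qed
qed
lemma qz_half_half: "qz_eq a (1/2) \<Longrightarrow> qz_eq b (1/2) \<Longrightarrow> qz_eq (a + b) (0::rat)"
  using qz_add[of a "1/2" b "1/2"] by (simp add: qz_eq_def)
lemma qz_half_zero: "qz_eq a (1/2) \<Longrightarrow> qz_eq a 0 \<Longrightarrow> False"
  using half_not_int qz_trans qz_sym by metis

lemma assoc_bil_sym: "assoc_bil q x y = assoc_bil q y x"
  unfolding assoc_bil_def by (simp add: add.commute)
lemma assoc_bil_0: "assoc_bil q x 0 = 0"
  unfolding assoc_bil_def by simp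

lemma zmult_0: "zmult 0 x = 0" by (simp add: zmult_def)
lemma zmult_2: "zmult 2 x = x + x" by (simp add: zmult_def numeral_2_eq_2)

definition psi :: "('a::ab_group_add \<Rightarrow> rat) \<Rightarrow> 'a \<Rightarrow> 'a \<Rightarrow> 'a" where
  "psi q f x = (if x \<in> G0 q f then x else x + f)"

context
  fixes q :: "'a::{ab_group_add,finite} \<Rightarrow> rat" and f :: 'a
  assumes P: "PSM_obj q f"
begin

lemma L_q0: "qz_eq (q 0) 0"
proof -
  have "qz_eq (q (zmult 0 0)) (of_int (0^2) * q 0)"
    using P unfolding PSM_obj_def homogeneous_def by blast
  then show ?thesis by (simp add: zmult_0)
qed

lemma L_badd: "qz_eq (assoc_bil q (x + x') y) (assoc_bil q x y + assoc_bil q x' y)"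
  using P unfolding PSM_obj_def is_quadratic_form_def by blast

lemma L_2bf: "qz_eq (assoc_bil q x f + assoc_bil q x f) 0"
proof -
  have "f + f = 0" using P unfolding PSM_obj_def by blast
  have "qz_eq (assoc_bil q f x + assoc_bil q f x) (assoc_bil q (f + f) x)"
    using L_badd qz_sym by blast
  then show ?thesis using \<open>f + f = 0\<close> assoc_bil_0 assoc_bil_sym by metis
qed

lemma L_dich: "x \<notin> G0 q f \<Longrightarrow> qz_eq (assoc_bil q x f) (1/2)"
  using qz_half_cases[OF L_2bf[of x]] unfolding G0_def by blast

lemma L_fG0: "f \<in> G0 q f"
proof -
  have ff: "f + f = 0" and qf: "qz_eq (q f) (1/2)" using P unfolding PSM_obj_def by blast+
  have "assoc_bil q f f = (q 0 + q 0) - (q f + q f)" unfolding assoc_bil_def ff by simp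
  moreover have "qz_eq ((q 0 + q 0) - (q f + q f)) ((0 + 0) - (1/2 + 1/2))"
    by (intro qz_diff qz_add L_q0 qf)
  ultimately have "qz_eq (assoc_bil q f f) (-1)" by simp
  moreover have "qz_eq (-1) (0::rat)" unfolding qz_eq_def by simp
  ultimately have "qz_eq (assoc_bil q f f) 0" by (rule qz_trans)
  then show ?thesis unfolding G0_def by simp
qed

lemma L_fne: "f \<noteq> 0"
proof
  assume "f = 0"
  then have "qz_eq (q 0) (1/2)" using P unfolding PSM_obj_def by blast
  then show False using L_q0 qz_half_zero by blast
qed

lemma L_exa: "\<exists>a. a \<notin> G0 q f"
proof -
  have "nondegenerate q" using P unfolding PSM_obj_def by blast
  then obtain y where "\<not> qz_eq (assoc_bil q f y) 0" using L_fne unfolding nondegenerate_def by blast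
  then have "\<not> qz_eq (assoc_bil q y f) 0" using assoc_bil_sym[of q f y] by simp
  then show ?thesis unfolding G0_def by blast
qed

lemma L_G0_add1: "x \<in> G0 q f \<Longrightarrow> y \<in> G0 q f \<Longrightarrow> x + y \<in> G0 q f"
proof -
  assume "x \<in> G0 q f" "y \<in> G0 q f"
  then have "qz_eq (assoc_bil q x f + assoc_bil q y f) (0 + 0)" unfolding G0_def by (intro qz_add) auto
  then have "qz_eq (assoc_bil q (x+y) f) 0" using L_badd[of x y f] qz_trans by simp
  then show ?thesis unfolding G0_def by simp
qed
lemma L_G0_add2: "x \<in> G0 q f \<Longrightarrow> y \<notin> G0 q f \<Longrightarrow> x + y \<notin> G0 q f"
proof
  assume "x \<in> G0 q f" "y \<notin> G0 q f" "x + y \<in> G0 q f"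
  then have a: "qz_eq (assoc_bil q x f) 0" "qz_eq (assoc_bil q y f) (1/2)" "qz_eq (assoc_bil q (x+y) f) 0"
    using L_dich unfolding G0_def by auto
  have "qz_eq (assoc_bil q x f + assoc_bil q y f) (0 + 1/2)" using a by (intro qz_add)
  then have "qz_eq (assoc_bil q (x+y) f) (1/2)" using L_badd[of x y f] qz_trans by simp
  then show False using a(3) qz_half_zero by blast
qed
lemma L_G0_add3: "x \<notin> G0 q f \<Longrightarrow> y \<notin> G0 q f \<Longrightarrow> x + y \<in> G0 q f"
proof -
  assume "x \<notin> G0 q f" "y \<notin> G0 q f"
  then have "qz_eq (assoc_bil q x f + assoc_bil q y f) 0" using qz_half_half[OF L_dich L_dich] by blast
  then have "qz_eq (assoc_bil q (x+y) f) 0" using L_badd[of x y f] qz_trans by blast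
  then show ?thesis unfolding G0_def by simp
qed
lemma L_0G0: "0 \<in> G0 q f"
  unfolding G0_def using assoc_bil_sym[of q 0 f] assoc_bil_0[of q f] by (simp add: qz_refl)
lemma L_G0_minus: "x \<notin> G0 q f \<Longrightarrow> - x \<notin> G0 q f"
  using L_G0_add2[of "-x" x] L_0G0 by auto

lemma L_qf: "q (x + f) = assoc_bil q x f + q x + q f - q 0"
  unfolding assoc_bil_def by simp

lemma L_qpsi: "x \<notin> G0 q f \<Longrightarrow> qz_eq (q (x + f)) (q x)"
proof -
  assume "x \<notin> G0 q f"
  have qf: "qz_eq (q f) (1/2)" using P unfolding PSM_obj_def by blast
  have "qz_eq (assoc_bil q x f + q x + q f - q 0) (1/2 + q x + 1/2 - 0)"
    by (intro qz_diff qz_add L_q0 qf qz_refl L_dich \<open>x \<notin> G0 q f\<close>)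
  then have "qz_eq (q (x + f)) (q x + 1)" unfolding L_qf by (simp add: algebra_simps)
  moreover have "qz_eq (q x + 1) (q x)" unfolding qz_eq_def by simp
  ultimately show ?thesis by (rule qz_trans)
qed

lemma L_qG0: "x \<in> G0 q f \<Longrightarrow> \<not> qz_eq (q (x + f)) (q x)"
proof
  assume "x \<in> G0 q f" "qz_eq (q (x + f)) (q x)"
  have qf: "qz_eq (q f) (1/2)" using P unfolding PSM_obj_def by blast
  have "qz_eq (assoc_bil q x f + q x + q f - q 0) (0 + q x + 1/2 - 0)"
    using \<open>x \<in> G0 q f\<close> unfolding G0_def
    by (intro qz_diff qz_add L_q0 qf qz_refl) auto
  then have "qz_eq (q (x + f)) (q x + 1/2)" unfolding L_qf by (simp add: algebra_simps)
  then have "qz_eq (q x + 1/2) (q x)" using \<open>qz_eq (q (x + f)) (q x)\<close> qz_sym qz_trans by blast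
  then have "qz_eq (1/2) 0" unfolding qz_eq_def by simp
  then show False using half_not_int by blast
qed


lemma L_ff: "f + f = 0"
  using P unfolding PSM_obj_def by blast

lemma L_psi_add: "psi q f (x + y) = psi q f x + psi q f y"
proof (cases "x \<in> G0 q f"; cases "y \<in> G0 q f")
  assume h: "x \<in> G0 q f" "y \<in> G0 q f"
  then have "x + y \<in> G0 q f" by (rule L_G0_add1)
  then show ?thesis using h unfolding psi_def by simp
next
  assume h: "x \<in> G0 q f" "y \<notin> G0 q f"
  then have "x + y \<notin> G0 q f" by (rule L_G0_add2)
  then show ?thesis using h unfolding psi_def by (simp add: add.assoc)
next
  assume h: "x \<notin> G0 q f" "y \<in> G0 q f"
  then have "y + x \<notin> G0 q f" using L_G0_add2 by blast
  then have "x + y \<notin> G0 q f" by (simp add: add.commute)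
  moreover have "x + y + f = x + f + y" by (simp add: ac_simps)
  ultimately show ?thesis using h unfolding psi_def by simp
next
  assume h: "x \<notin> G0 q f" "y \<notin> G0 q f"
  then have "x + y \<in> G0 q f" by (rule L_G0_add3)
  moreover have "x + f + (y + f) = x + y + (f + f)" by (simp add: ac_simps)
  ultimately show ?thesis using h L_ff unfolding psi_def by simp
qed

lemma L_psi_inv: "psi q f (psi q f x) = x"
proof (cases "x \<in> G0 q f")
  case True then show ?thesis by (simp add: psi_def)
next
  case False
  then have "f + x \<notin> G0 q f" using L_G0_add2 L_fG0 by blast
  then have "x + f \<notin> G0 q f" by (simp add: add.commute)
  moreover have "x + f + f = x" using L_ff by (simp add: add.assoc)
  ultimately show ?thesis using False by (simp add: psi_def)
qed

lemma L_psi_aut: "psi q f \<in> PSM_aut q f"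
proof -
  have "bij (psi q f)" by (rule involuntory_imp_bij) (rule L_psi_inv)
  moreover have "\<forall>x. qz_eq (q (psi q f x)) (q x)"
    using L_qpsi by (simp add: psi_def qz_refl)
  moreover have "psi q f f = f" using L_fG0 by (simp add: psi_def)
  ultimately show ?thesis unfolding PSM_aut_def using L_psi_add by blast
qed

lemma L_psi_ker: "psi q f \<in> F_kernel q f"
proof -
  have "F_mor (psi q f) C = C" if C: "C \<in> Dgrp q f" for C
  proof -
    obtain x where x: "x \<in> G0 q f" "C = (\<lambda>y. x + y) ` {0, f}" using C unfolding Dgrp_def mem_Collect_eq by blast
    then have "x + f \<in> G0 q f" using L_G0_add1 L_fG0 by blast
    then show ?thesis using x by (simp add: F_mor_def psi_def)
  qed
  then show ?thesis unfolding F_kernel_def using L_psi_aut by blast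
qed

lemma L_id_ker: "id \<in> F_kernel q f"
  unfolding F_kernel_def PSM_aut_def F_mor_def by (simp add: qz_refl)

lemma L_psi_ne: "psi q f \<noteq> id"
proof
  assume h: "psi q f = id"
  obtain a where a: "a \<notin> G0 q f" using L_exa by blast
  then have "a + f = a" using fun_cong[OF h, of a] by (simp add: psi_def)
  then show False using L_fne by simp
qed

lemma L_ext:
  assumes a: "a \<notin> G0 q f" and ea: "qz_eq (assoc_bil q e a) 0"
    and ex: "\<And>x. x \<in> G0 q f \<Longrightarrow> qz_eq (assoc_bil q e x) 0"
  shows "e = 0"
proof -
  have "qz_eq (assoc_bil q e y) 0" for y
  proof (cases "y \<in> G0 q f")
    case True then show ?thesis using ex by blast
  next
    case False
    have yG: "y + - a \<in> G0 q f" using L_G0_add3[OF False L_G0_minus[OF a]] .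
    have e1: "qz_eq (assoc_bil q a e) 0" using ea assoc_bil_sym[of q e a] by simp
    have e2: "qz_eq (assoc_bil q (y + - a) e) 0" using ex[OF yG] assoc_bil_sym[of q e "y + - a"] by simp
    have e3: "qz_eq (assoc_bil q (a + (y + - a)) e) (assoc_bil q a e + assoc_bil q (y + - a) e)"
      by (rule L_badd)
    have e4: "qz_eq (assoc_bil q (a + (y + - a)) e) (0 + 0)"
      by (rule qz_trans[OF e3 qz_add[OF e1 e2]])
    have "a + (y + - a) = y" by (simp add: algebra_simps)
    with e4 show ?thesis using assoc_bil_sym[of q y e] by simp
  qed
  then have "\<forall>y. qz_eq (assoc_bil q e y) 0" by blast
  moreover have "nondegenerate q" using P unfolding PSM_obj_def by blast
  ultimately show ?thesis unfolding nondegenerate_def by simp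
qed

lemma L_class:
  assumes phi: "\<phi> \<in> F_kernel q f"
  shows "\<phi> = id \<or> \<phi> = psi q f"
proof -
  have hom: "\<And>x y. \<phi> (x + y) = \<phi> x + \<phi> y" and qp: "\<And>x. qz_eq (q (\<phi> x)) (q x)"
    and kerC: "\<And>C. C \<in> Dgrp q f \<Longrightarrow> \<phi> ` C = C"
    using phi unfolding F_kernel_def PSM_aut_def F_mor_def by blast+
  have phi0: "\<phi> 0 = 0" using hom[of 0 0] by simp
  have step1: "\<phi> x = x" if x: "x \<in> G0 q f" for x
  proof -
    have "(\<lambda>y. x + y) ` {0, f} \<in> Dgrp q f" unfolding Dgrp_def using x by blast
    then have "\<phi> ` ((\<lambda>y. x + y) ` {0, f}) = (\<lambda>y. x + y) ` {0, f}" by (rule kerC)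
    then have "\<phi> ` {x, x + f} = {x, x + f}" by simp
    then have "\<phi> x = x \<or> \<phi> x = x + f" by blast
    moreover have "\<phi> x \<noteq> x + f" using qp[of x] L_qG0[OF x] by auto
    ultimately show ?thesis by blast
  qed
  have bp: "qz_eq (assoc_bil q (\<phi> x) (\<phi> y)) (assoc_bil q x y)" for x y
  proof -
    have "qz_eq (q (\<phi> (x + y)) - q (\<phi> x) - q (\<phi> y) + q (\<phi> 0)) (q (x + y) - q x - q y + q 0)"
      by (intro qz_add qz_diff qp)
    then show ?thesis unfolding assoc_bil_def using hom phi0 by simp
  qed
  obtain a where a: "a \<notin> G0 q f" using L_exa by blast
  define d where "d = \<phi> a - a"
  have phia: "\<phi> a = a + d" unfolding d_def by simp
  have decomp: "\<phi> y = a + d + (y - a)" if y: "y \<notin> G0 q f" for y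
  proof -
    have "y + - a \<in> G0 q f" using L_G0_add3 L_G0_minus a y by blast
    then have "\<phi> (y - a) = y - a" using step1 by simp
    moreover have "\<phi> y = \<phi> a + \<phi> (y - a)" using hom[of a "y - a"] by simp
    ultimately show ?thesis using phia by simp
  qed
  have bdx: "qz_eq (assoc_bil q d x) 0" if x: "x \<in> G0 q f" for x
  proof -
    have h1: "qz_eq (assoc_bil q (a + d) x) (assoc_bil q a x)" using bp[of a x] step1[OF x] phia by simp
    have h2: "qz_eq (assoc_bil q (a + d) x) (assoc_bil q a x + assoc_bil q d x)" by (rule L_badd)
    have "qz_eq ((assoc_bil q a x + assoc_bil q d x) - assoc_bil q a x) (assoc_bil q a x - assoc_bil q a x)"
      using qz_trans[OF qz_sym[OF h2] h1] qz_refl by (rule qz_diff)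
    then show ?thesis by simp
  qed
  have aa: "a + a \<in> G0 q f" using L_G0_add3 a by blast
  have bda2: "qz_eq (assoc_bil q d a + assoc_bil q d a) 0"
  proof -
    have "qz_eq (assoc_bil q (a + a) d) (assoc_bil q a d + assoc_bil q a d)" by (rule L_badd)
    then have "qz_eq (assoc_bil q d (a + a)) (assoc_bil q d a + assoc_bil q d a)"
      using assoc_bil_sym[of q d "a + a"] assoc_bil_sym[of q a d] by simp
    then show ?thesis using qz_trans[OF qz_sym] bdx[OF aa] by blast
  qed
  show ?thesis
  proof (cases "qz_eq (assoc_bil q d a) 0")
    case True
    then have "d = 0" using L_ext[OF a _ bdx] by blast
    then have "\<phi> y = y" for y using step1 decomp by (cases "y \<in> G0 q f") auto
    then show ?thesis by auto
  next
    case False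
    then have dh: "qz_eq (assoc_bil q d a) (1/2)" using qz_half_cases[OF bda2] by blast
    have fa: "qz_eq (assoc_bil q f a) (1/2)" using L_dich[OF a] assoc_bil_sym[of q f a] by simp
    have "d + f = 0"
    proof (rule L_ext[OF a])
      show "qz_eq (assoc_bil q (d + f) a) 0"
        by (rule qz_trans[OF L_badd[of d f a] qz_half_half[OF dh fa]])
      fix x assume x: "x \<in> G0 q f"
      have "qz_eq (assoc_bil q f x) 0" using x assoc_bil_sym[of q f x] unfolding G0_def by simp
      then have "qz_eq (assoc_bil q d x + assoc_bil q f x) (0 + 0)" using bdx[OF x] qz_add by blast
      then have "qz_eq (assoc_bil q d x + assoc_bil q f x) 0" by simp
      then show "qz_eq (assoc_bil q (d + f) x) 0" by (rule qz_trans[OF L_badd[of d f x]])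
    qed
    then have "d + f = f + f" using L_ff by simp
    then have "d = f" by simp
    then have "\<phi> y = psi q f y" for y using step1 decomp
      by (cases "y \<in> G0 q f") (auto simp: psi_def algebra_simps)
    then show ?thesis by auto
  qed
qed

lemma L_kernel: "F_kernel q f = {id, psi q f}"
  using L_class L_id_ker L_psi_ker by blast

end

theorem mainTheorem7:
  fixes q :: "'a::{ab_group_add,finite} \<Rightarrow> rat" and f :: 'a
  assumes "PSM_obj q f"
  shows "F_kernel_group q f \<cong> integer_mod_group 2"
proof -
  let ?p = "psi q f"
  define h where "h = (\<lambda>\<phi>::'a \<Rightarrow> 'a. if \<phi> = id then (0::int) else 1)"
  have K: "carrier (F_kernel_group q f) = {id, ?p}"
    using L_kernel[OF assms] by (simp add: F_kernel_group_def)
  have ne: "?p \<noteq> id" by (rule L_psi_ne[OF assms])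
  have pp: "?p \<circ> ?p = id" using L_psi_inv[OF assms] by (simp add: fun_eq_iff)
  have C2: "carrier (integer_mod_group 2) = {0, 1}" by (auto simp: carrier_integer_mod_group)
  have "h \<in> hom (F_kernel_group q f) (integer_mod_group 2)"
    unfolding hom_def using ne pp by (auto simp: L_kernel[OF assms] C2 h_def F_kernel_group_def)
  moreover have "bij_betw h (carrier (F_kernel_group q f)) (carrier (integer_mod_group 2))"
    unfolding K C2 bij_betw_def using ne by (auto simp: h_def)
  ultimately show ?thesis by (intro is_isoI isoI)
qed

end
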